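(* Let $G$ be a hybrid graph. If the density matrix $\rho(G)$ is separable and the partial transpose graph $G^\Gamma$ is a NOI-graph or a COI-graph, then $D(G)=D(G^\Gamma)$.
   Context: A hybrid graph $G=(V,E_L+E_Q)$ is a grid-labelled graph (vertices $(i,j)$ on a grid, vertex $(i,j)$ identified with $|ij\rangle\in\mathbb{C}^{m_1}\otimes\mathbb{C}^{m_2}$) with a set $E_L$ of $L$-edges and a set $E_Q$ of $Q$-edges; an $L$-edge $\{(i,j),(k,l)\}$ has state $\frac1{\sqrt2}(|ij\rangle-|kl\rangle)$, a $Q$-edge has state $\frac1{\sqrt2}(|ij\rangle+|kl\rangle)$. Its hybrid Laplacian is $\mathcal{L}(G)=L(S_l)+Q(S_q)$, where $S_l=(V,E_L)$, $S_q=(V,E_Q)$, $L=D-A$ is the signed and $Q=D+A$ the signless Laplacian; $\rho(G)$ is the normalized $\mathcal{L}(G)$, i.e. the equal mixture of all edge-state projectors. $D(G)$ is the diagonal matrix of vertex degrees counting edges of both types. The partial transpose graph $G^\Gamma$ has the same vertex set and contains the edge $\{(i,l),(k,j)\}$ of a given type iff $G$ contains the edge $\{(i,j),(k,l)\}$ of that type. $G$ is a NOI-graph if its $Q$-subgraph $S_q$ is bipartite and no vertex is incident to both a $Q$-edge and an $L$-edge. $G$ is a COI-graph if $S_q$ is bipartite with a bipartition $(P_1,P_2)$ of $V$ (every $Q$-edge joining $P_1$ to $P_2$) such that every $L$-edge joins two vertices in the same part. *)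

theory Defs
  imports Complex_Main
begin

text \<open>Vertices are grid points (i,j) with i < m1, j < m2; vertex (i,j) is the basis
vector |ij> of C^m1 (x) C^m2.  Matrices on
C^m1 (x) C^m2 are represented as functions of two grid indices (row, column).\<close>

record hgraph =
  EL :: "(nat \<times> nat) set set"
  EQ :: "(nat \<times> nat) set set"

definition grid :: "nat \<Rightarrow> nat \<Rightarrow> (nat \<times> nat) set" where
  "grid m1 m2 = {0..<m1} \<times> {0..<m2}"

definition is_edge_on :: "(nat \<times> nat) set \<Rightarrow> (nat \<times> nat) set \<Rightarrow> bool" where
  "is_edge_on V e \<longleftrightarrow> (\<exists>u v. u \<in> V \<and> v \<in> V \<and> u \<noteq> v \<and> e = {u, v})"

definition hybrid_graph :: "nat \<Rightarrow> nat \<Rightarrow> hgraph \<Rightarrow> bool" where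
  "hybrid_graph m1 m2 G \<longleftrightarrow>
     (\<forall>e \<in> EL G. is_edge_on (grid m1 m2) e) \<and>
     (\<forall>e \<in> EQ G. is_edge_on (grid m1 m2) e) \<and>
     EL G \<inter> EQ G = {}"

definition deg :: "hgraph \<Rightarrow> nat \<times> nat \<Rightarrow> nat" where
  "deg G v = card {e \<in> EL G. v \<in> e} + card {e \<in> EQ G. v \<in> e}"

definition degree_matrix :: "hgraph \<Rightarrow> nat \<times> nat \<Rightarrow> nat \<times> nat \<Rightarrow> real" where
  "degree_matrix G u v = (if u = v then real (deg G u) else 0)"

text \<open>Hybrid Laplacian L(S_l) + Q(S_q) = D(G) - A(S_l) + A(S_q).\<close>
definition hybrid_laplacian :: "hgraph \<Rightarrow> nat \<times> nat \<Rightarrow> nat \<times> nat \<Rightarrow> real" where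
  "hybrid_laplacian G u v =
     degree_matrix G u v
     - (if {u, v} \<in> EL G \<and> u \<noteq> v then 1 else 0)
     + (if {u, v} \<in> EQ G \<and> u \<noteq> v then 1 else 0)"

definition density :: "nat \<Rightarrow> nat \<Rightarrow> hgraph \<Rightarrow> nat \<times> nat \<Rightarrow> nat \<times> nat \<Rightarrow> complex" where
  "density m1 m2 G u v =
     complex_of_real (hybrid_laplacian G u v / (\<Sum>w \<in> grid m1 m2. hybrid_laplacian G w w))"

definition separable :: "nat \<Rightarrow> nat \<Rightarrow> (nat \<times> nat \<Rightarrow> nat \<times> nat \<Rightarrow> complex) \<Rightarrow> bool" where
  "separable m1 m2 \<rho> \<longleftrightarrow>
     (\<exists>(n::nat) (p::nat \<Rightarrow> real) (a::nat \<Rightarrow> nat \<Rightarrow> complex) (b::nat \<Rightarrow> nat \<Rightarrow> complex).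
        (\<forall>t<n. p t \<ge> 0) \<and> (\<Sum>t<n. p t) = 1 \<and>
        (\<forall>t<n. (\<Sum>i<m1. (cmod (a t i))\<^sup>2) = 1 \<and> (\<Sum>j<m2. (cmod (b t j))\<^sup>2) = 1) \<and>
        (\<forall>i<m1. \<forall>j<m2. \<forall>k<m1. \<forall>l<m2.
           \<rho> (i, j) (k, l) =
             (\<Sum>t<n. complex_of_real (p t) * (a t i * b t j) * cnj (a t k * b t l))))"

definition ptrans_edges :: "(nat \<times> nat) set set \<Rightarrow> (nat \<times> nat) set set" where
  "ptrans_edges E = {{(i, l), (k, j)} | i j k l. {(i, j), (k, l)} \<in> E}"

definition ptrans :: "hgraph \<Rightarrow> hgraph" where
  "ptrans G = \<lparr>EL = ptrans_edges (EL G), EQ = ptrans_edges (EQ G)\<rparr>"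

definition q_bipartition :: "(nat \<times> nat) set \<Rightarrow> hgraph \<Rightarrow> (nat \<times> nat) set \<Rightarrow> (nat \<times> nat) set \<Rightarrow> bool" where
  "q_bipartition V G P1 P2 \<longleftrightarrow>
     P1 \<inter> P2 = {} \<and> P1 \<union> P2 = V \<and>
     (\<forall>e \<in> EQ G. \<exists>u \<in> P1. \<exists>v \<in> P2. e = {u, v})"

definition NOI_graph :: "nat \<Rightarrow> nat \<Rightarrow> hgraph \<Rightarrow> bool" where
  "NOI_graph m1 m2 G \<longleftrightarrow>
     (\<exists>P1 P2. q_bipartition (grid m1 m2) G P1 P2) \<and>
     (\<forall>v \<in> grid m1 m2. \<not> ((\<exists>e \<in> EQ G. v \<in> e) \<and> (\<exists>e \<in> EL G. v \<in> e)))"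

definition COI_graph :: "nat \<Rightarrow> nat \<Rightarrow> hgraph \<Rightarrow> bool" where
  "COI_graph m1 m2 G \<longleftrightarrow>
     (\<exists>P1 P2. q_bipartition (grid m1 m2) G P1 P2 \<and>
        (\<forall>e \<in> EL G. (\<exists>u \<in> P1. \<exists>v \<in> P1. e = {u, v}) \<or> (\<exists>u \<in> P2. \<exists>v \<in> P2. e = {u, v})))"

end

theory Submission
  imports Defs
begin


lemma ptrans_mem: "{(i,j),(k,l)} \<in> ptrans_edges E \<longleftrightarrow> {(i,l),(k,j)} \<in> E"
proof
  assume "{(i,l),(k,j)} \<in> E"
  then show "{(i,j),(k,l)} \<in> ptrans_edges E" unfolding ptrans_edges_def by blast
next
  assume "{(i,j),(k,l)} \<in> ptrans_edges E"
  then obtain i' j' k' l' where e: "{(i,j),(k,l)} = {(i',l'),(k',j')}" and m: "{(i',j'),(k',l')} \<in> E"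
    unfolding ptrans_edges_def by blast
  from e have "((i,j) = (i',l') \<and> (k,l) = (k',j')) \<or> ((i,j) = (k',j') \<and> (k,l) = (i',l'))"
    by (simp add: doubleton_eq_iff)
  then show "{(i,l),(k,j)} \<in> E" using m by (auto simp: insert_commute)
qed

lemma ptrans_edge_on:
  assumes "\<forall>e\<in>E. is_edge_on (grid m1 m2) e" "e \<in> ptrans_edges E"
  shows "is_edge_on (grid m1 m2) e"
proof -
  from assms(2) obtain i j k l where e: "e = {(i,l),(k,j)}" and m: "{(i,j),(k,l)} \<in> E"
    unfolding ptrans_edges_def by blast
  from assms(1) m obtain u v where uv: "u \<in> grid m1 m2" "v \<in> grid m1 m2" "u \<noteq> v" "{(i,j),(k,l)} = {u,v}"
    unfolding is_edge_on_def by blast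
  then have g: "(i,j) \<in> grid m1 m2" "(k,l) \<in> grid m1 m2" "(i,j) \<noteq> (k,l)"
    by (auto simp: doubleton_eq_iff)
  have "(i,l) \<in> grid m1 m2" "(k,j) \<in> grid m1 m2" "(i,l) \<noteq> (k,j)" using g by (auto simp: grid_def)
  then show ?thesis unfolding is_edge_on_def e by blast
qed

lemma deg_nbrs:
  assumes "\<forall>e\<in>E. is_edge_on V e"
  shows "card {e\<in>E. v\<in>e} = card {w\<in>V. w\<noteq>v \<and> {v,w}\<in>E}"
proof -
  have "bij_betw (\<lambda>w. {v,w}) {w\<in>V. w\<noteq>v \<and> {v,w}\<in>E} {e\<in>E. v\<in>e}"
  proof (rule bij_betw_imageI)
    show "inj_on (\<lambda>w. {v,w}) {w\<in>V. w\<noteq>v \<and> {v,w}\<in>E}"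
      by (auto simp: inj_on_def doubleton_eq_iff)
    show "(\<lambda>w. {v,w}) ` {w\<in>V. w\<noteq>v \<and> {v,w}\<in>E} = {e\<in>E. v\<in>e}"
    proof
      show "(\<lambda>w. {v,w}) ` {w\<in>V. w\<noteq>v \<and> {v,w}\<in>E} \<subseteq> {e\<in>E. v\<in>e}" by auto
      show "{e\<in>E. v\<in>e} \<subseteq> (\<lambda>w. {v,w}) ` {w\<in>V. w\<noteq>v \<and> {v,w}\<in>E}"
      proof
        fix e assume "e \<in> {e\<in>E. v\<in>e}"
        then have "e \<in> E" "v \<in> e" by auto
        with assms obtain a b where "a\<in>V" "b\<in>V" "a\<noteq>b" "e = {a,b}" unfolding is_edge_on_def by blast
        moreover have "e = {a,b}" by fact
        ultimately have "(v = a \<and> e = {v,b} \<and> b \<noteq> v \<and> b \<in> V) \<or> (v = b \<and> e = {v,a} \<and> a \<noteq> v \<and> a \<in> V)"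
          using \<open>v\<in>e\<close> by (metis empty_iff insert_commute insert_iff)
        with \<open>e\<in>E\<close> show "e \<in> (\<lambda>w. {v,w}) ` {w\<in>V. w\<noteq>v \<and> {v,w}\<in>E}"
          by blast
      qed
    qed
  qed
  then show ?thesis by (simp add: bij_betw_same_card)
qed

lemma sum_nbrs:
  assumes "finite V"
  shows "(\<Sum>v\<in>V. card {w\<in>V. w\<noteq>v \<and> {v,w}\<in>E}) = card {(v,w)\<in>V\<times>V. v\<noteq>w \<and> {v,w}\<in>E}"
proof -
  have "{(v,w)\<in>V\<times>V. v\<noteq>w \<and> {v,w}\<in>E} = Sigma V (\<lambda>v. {w\<in>V. w\<noteq>v \<and> {v,w}\<in>E})" by auto
  then show ?thesis using assms by (simp add: card_SigmaI)
qed

definition phi :: "(nat\<times>nat)\<times>(nat\<times>nat) \<Rightarrow> (nat\<times>nat)\<times>(nat\<times>nat)" where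
  "phi p = ((fst (fst p), snd (snd p)), (fst (snd p), snd (fst p)))"

lemma card_pairs_ptrans:
  "card {(v,w)\<in>grid m1 m2\<times>grid m1 m2. v\<noteq>w \<and> {v,w}\<in>ptrans_edges E}
   = card {(v,w)\<in>grid m1 m2\<times>grid m1 m2. v\<noteq>w \<and> {v,w}\<in>E}"
proof -
  let ?A = "{(v,w)\<in>grid m1 m2\<times>grid m1 m2. v\<noteq>w \<and> {v,w}\<in>ptrans_edges E}"
  let ?B = "{(v,w)\<in>grid m1 m2\<times>grid m1 m2. v\<noteq>w \<and> {v,w}\<in>E}"
  have pp: "phi (phi p) = p" for p by (simp add: phi_def)
  have i: "inj phi" by (metis pp injI)
  have "phi ` ?A = ?B"
  proof
    show "phi ` ?A \<subseteq> ?B"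
    proof
      fix p assume "p \<in> phi ` ?A"
      then obtain i j k l where "p = phi ((i,j),(k,l))" "((i,j),(k,l)) \<in> ?A" by auto
      then show "p \<in> ?B" by (simp add: phi_def grid_def ptrans_mem) blast
    qed
    show "?B \<subseteq> phi ` ?A"
    proof
      fix p assume "p \<in> ?B"
      then obtain i j k l where "p = ((i,j),(k,l))" "p \<in> ?B" by (metis prod.exhaust)
      then have "phi p \<in> ?A" by (simp add: phi_def grid_def ptrans_mem) blast
      then have "phi (phi p) \<in> phi ` ?A" by (rule imageI)
      then show "p \<in> phi ` ?A" by (simp only: pp)
    qed
  qed
  moreover have "card (phi ` ?A) = card ?A" by (rule card_image[OF inj_on_subset[OF i subset_UNIV]])
  ultimately show ?thesis by simp
qed



lemma hl_sym: "hybrid_laplacian G a b = hybrid_laplacian G b a"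
  unfolding hybrid_laplacian_def degree_matrix_def by (auto simp: insert_commute)

lemma hl_diag: "hybrid_laplacian G v v = real (deg G v)"
  unfolding hybrid_laplacian_def degree_matrix_def by simp

definition Rm :: "hgraph \<Rightarrow> nat\<times>nat \<Rightarrow> nat\<times>nat \<Rightarrow> real" where
  "Rm G u w = hybrid_laplacian G (fst u, snd w) (fst w, snd u)"

lemma Rm_sym: "Rm G u w = Rm G w u"
  unfolding Rm_def by (rule hl_sym)

lemma Rm_eq: "Rm G u w = (if u = w then real (deg G u) else 0)
   - (if {u,w} \<in> EL (ptrans G) \<and> u \<noteq> w then 1 else 0)
   + (if {u,w} \<in> EQ (ptrans G) \<and> u \<noteq> w then 1 else 0)"
proof -
  obtain i j where u: "u = (i,j)" by (metis prod.exhaust)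
  obtain k l where w: "w = (k,l)" by (metis prod.exhaust)
  have e1: "((i,l) = (k,j)) = ((i,j) = (k,l))" by auto
  have e2: "deg G (i,l) = deg G (i,j)" if "(i,j) = (k,l)" using that by auto
  show ?thesis unfolding u w Rm_def hybrid_laplacian_def degree_matrix_def ptrans_def hgraph.simps fst_conv snd_conv ptrans_mem
    using e1 e2 by presburger
qed




lemma sign_exists:
  assumes "NOI_graph m1 m2 H \<or> COI_graph m1 m2 H"
  shows "\<exists>s::nat\<times>nat\<Rightarrow>real. (\<forall>v. s v = 1 \<or> s v = -1) \<and> (\<forall>u v. {u,v} \<in> EL H \<longrightarrow> s u = s v)
     \<and> (\<forall>u v. {u,v} \<in> EQ H \<longrightarrow> s v = - s u)"
proof (cases "NOI_graph m1 m2 H")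
  case True
  then have "NOI_graph m1 m2 H" .
  then obtain P1 P2 where b: "q_bipartition (grid m1 m2) H P1 P2"
    and n: "\<forall>v \<in> grid m1 m2. \<not> ((\<exists>e \<in> EQ H. v \<in> e) \<and> (\<exists>e \<in> EL H. v \<in> e))"
    unfolding NOI_graph_def by blast
  define s where "s v = (if (\<exists>e\<in>EL H. v \<in> e) then 1 else if v \<in> P1 then 1 else (-1::real))" for v
  have "\<forall>u v. {u,v} \<in> EQ H \<longrightarrow> s v = - s u"
  proof (intro allI impI)
    fix u v assume q: "{u,v} \<in> EQ H"
    from b have "\<forall>e \<in> EQ H. \<exists>u \<in> P1. \<exists>v \<in> P2. e = {u, v}" unfolding q_bipartition_def by simp
    then have "\<exists>p1 \<in> P1. \<exists>p2 \<in> P2. {u,v} = {p1,p2}" using q by (rule bspec)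
    then obtain p1 p2 where p: "p1 \<in> P1" "p2 \<in> P2" "{u,v} = {p1,p2}" by (elim bexE)
    from b have d: "P1 \<inter> P2 = {}" "P1 \<union> P2 = grid m1 m2" unfolding q_bipartition_def by auto
    from p(3) have "(u = p1 \<and> v = p2) \<or> (u = p2 \<and> v = p1)" by (simp add: doubleton_eq_iff)
    with p d have c: "(u \<in> P1 \<and> v \<notin> P1 \<or> v \<in> P1 \<and> u \<notin> P1) \<and> u \<in> grid m1 m2 \<and> v \<in> grid m1 m2"
      by blast
    have "\<exists>e \<in> EQ H. u \<in> e" "\<exists>e \<in> EQ H. v \<in> e" using q by blast+
    then have "\<not> (\<exists>e \<in> EL H. u \<in> e)" "\<not> (\<exists>e \<in> EL H. v \<in> e)" using n c by blast+
    then show "s v = - s u" using c unfolding s_def by auto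
  qed
  moreover have "\<forall>u v. {u,v} \<in> EL H \<longrightarrow> s u = s v" unfolding s_def by auto
  moreover have "\<forall>v. s v = 1 \<or> s v = -1" unfolding s_def by auto
  ultimately show ?thesis by blast
next
  case False
  with assms have "COI_graph m1 m2 H" by blast
  then obtain P1 P2 where b: "q_bipartition (grid m1 m2) H P1 P2"
    and l: "\<forall>e \<in> EL H. (\<exists>u \<in> P1. \<exists>v \<in> P1. e = {u, v}) \<or> (\<exists>u \<in> P2. \<exists>v \<in> P2. e = {u, v})"
    unfolding COI_graph_def by blast
  from b have d: "P1 \<inter> P2 = {}" unfolding q_bipartition_def by auto
  define s where "s v = (if v \<in> P1 then 1 else (-1::real))" for v
  have "\<forall>u v. {u,v} \<in> EQ H \<longrightarrow> s v = - s u"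
  proof (intro allI impI)
    fix u v assume q: "{u,v} \<in> EQ H"
    from b have "\<forall>e \<in> EQ H. \<exists>u \<in> P1. \<exists>v \<in> P2. e = {u, v}" unfolding q_bipartition_def by simp
    then have "\<exists>p1 \<in> P1. \<exists>p2 \<in> P2. {u,v} = {p1,p2}" using q by (rule bspec)
    then obtain p1 p2 where p: "p1 \<in> P1" "p2 \<in> P2" "{u,v} = {p1,p2}" by (elim bexE)
    from p(3) have "(u = p1 \<and> v = p2) \<or> (u = p2 \<and> v = p1)" by (simp add: doubleton_eq_iff)
    with p d have c: "(u \<in> P1 \<and> v \<notin> P1 \<or> v \<in> P1 \<and> u \<notin> P1)"
      by blast
    then show "s v = - s u" unfolding s_def by auto
  qed
  moreover have "\<forall>u v. {u,v} \<in> EL H \<longrightarrow> s u = s v"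
  proof (intro allI impI)
    fix u v assume q: "{u,v} \<in> EL H"
    with l obtain a b where "(a \<in> P1 \<and> b \<in> P1 \<or> a \<in> P2 \<and> b \<in> P2) \<and> {u,v} = {a,b}" by blast
    then have "u \<in> P1 \<and> v \<in> P1 \<or> u \<in> P2 \<and> v \<in> P2" by (metis doubleton_eq_iff)
    then show "s u = s v" using d unfolding s_def by auto
  qed
  moreover have "\<forall>v. s v = 1 \<or> s v = -1" unfolding s_def by auto
  ultimately show ?thesis by blast
qed



lemma quad_zero:
  fixes a b :: real
  assumes "\<forall>t. 2*t*a + t^2*b \<ge> 0"
  shows "a = 0"
proof (rule ccontr)
  assume a: "a \<noteq> 0"
  define c where "c = \<bar>b\<bar> + 1"
  have c: "c > 0" "b \<le> c - 1" unfolding c_def by auto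
  define t where "t = - a / c"
  have h: "2*t*a + t^2*b \<ge> 0" using assms by blast
  have eq: "c^2 * (2*t*a + t^2*b) = a^2 * (b - 2*c)"
    unfolding t_def using c(1) by (simp add: field_simps power2_eq_square)
  have "b - 2*c < 0" using c by linarith
  moreover have "a^2 > 0" using a by simp
  ultimately have "a^2 * (b - 2*c) < 0" by (simp add: mult_pos_neg)
  moreover have "c^2 * (2*t*a + t^2*b) \<ge> 0" using h by simp
  ultimately show False using eq by linarith
qed

lemma sum_if_card:
  assumes "finite V"
  shows "(\<Sum>w\<in>V. if P w then (c::real) else 0) = c * real (card {w\<in>V. P w})"
proof -
  have "(\<Sum>w\<in>V. if P w then c else 0) = sum (\<lambda>_. c) {w\<in>V. P w}"
    using sum.inter_filter[OF assms, of "\<lambda>_. c" P] by simp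
  then show ?thesis by (simp add: mult.commute)
qed

lemma expand:
  fixes R :: "'a \<Rightarrow> 'a \<Rightarrow> real"
  assumes "finite V" "v \<in> V" "\<And>u w. R u w = R w u"
  shows "(\<Sum>u\<in>V. \<Sum>w\<in>V. (s u + t*(if u=v then 1 else 0)) * (s w + t*(if w = v then 1 else 0)) * R u w)
    = (\<Sum>u\<in>V. \<Sum>w\<in>V. s u * s w * R u w) + 2*t*(\<Sum>w\<in>V. R v w * s w) + t^2 * R v v"
proof -
  have e: "(s u + t*(if u=v then 1 else 0)) * (s w + t*(if w = v then 1 else 0)) * R u w
     = s u * s w * R u w + (if u = v then t * s w * R v w else 0) + (if w = v then t * s u * R v u else 0)
       + (if u = v then (if w = v then t^2 * R v v else 0) else 0)" for u w
    using assms(3)[of u v] by (auto simp: algebra_simps power2_eq_square)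
  have "(\<Sum>u\<in>V. \<Sum>w\<in>V. (s u + t*(if u=v then 1 else 0)) * (s w + t*(if w = v then 1 else 0)) * R u w)
     = (\<Sum>u\<in>V. \<Sum>w\<in>V. s u * s w * R u w) + (\<Sum>u\<in>V. \<Sum>w\<in>V. (if u = v then t * s w * R v w else 0))
       + (\<Sum>u\<in>V. \<Sum>w\<in>V. (if w = v then t * s u * R v u else 0))
       + (\<Sum>u\<in>V. \<Sum>w\<in>V. (if u = v then (if w = v then t^2 * R v v else 0) else 0))"
    by (simp only: e sum.distrib)
  also have "(\<Sum>u\<in>V. \<Sum>w\<in>V. (if u = v then t * s w * R v w else 0)) = (\<Sum>u\<in>V. if u = v then (\<Sum>w\<in>V. t * s w * R v w) else 0)"
    by (intro sum.cong refl) simp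
  also have "\<dots> = t * (\<Sum>w\<in>V. R v w * s w)"
    using assms(1,2) by (simp add: sum_distrib_left mult_ac)
  also have "(\<Sum>u\<in>V. \<Sum>w\<in>V. (if w = v then t * s u * R v u else 0)) = t * (\<Sum>w\<in>V. R v w * s w)"
    using assms(1,2) by (simp add: sum.delta' sum_distrib_left mult_ac)
  also have "(\<Sum>u\<in>V. \<Sum>w\<in>V. (if u = v then (if w = v then t^2 * R v v else 0) else 0))
      = (\<Sum>u\<in>V. (if u = v then t^2 * R v v else 0))"
    by (intro sum.cong refl) (simp add: assms(1,2))
  also have "\<dots> = t^2 * R v v"
    by (simp add: assms(1,2))
  finally show ?thesis by simp
qed

lemma psd:
  assumes sep: "separable m1 m2 (density m1 m2 G)"
    and T: "T = (\<Sum>w\<in>grid m1 m2. hybrid_laplacian G w w)" "T > 0"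
  shows "(\<Sum>u\<in>grid m1 m2. \<Sum>w\<in>grid m1 m2. x u * x w * Rm G u w) \<ge> 0"
proof -
  let ?V = "grid m1 m2"
  have fin: "finite ?V" unfolding grid_def by simp
  from sep obtain n and p :: "nat \<Rightarrow> real" and a b :: "nat \<Rightarrow> nat \<Rightarrow> complex" where p: "\<forall>t<n. p t \<ge> 0"
    and eq: "\<forall>i<m1. \<forall>j<m2. \<forall>k<m1. \<forall>l<m2.
           density m1 m2 G (i, j) (k, l) =
             (\<Sum>t<n. complex_of_real (p t) * (a t i * b t j) * cnj (a t k * b t l))"
    unfolding separable_def by blast
  have dens: "complex_of_real (Rm G u w / T) =
      (\<Sum>t<n. complex_of_real (p t) * (a t (fst u) * b t (snd w)) * cnj (a t (fst w) * b t (snd u)))"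
    if "u \<in> ?V" "w \<in> ?V" for u w
  proof -
    have "fst u < m1" "snd u < m2" "fst w < m1" "snd w < m2" using that by (auto simp: grid_def)
    then have "density m1 m2 G (fst u, snd w) (fst w, snd u) =
      (\<Sum>t<n. complex_of_real (p t) * (a t (fst u) * b t (snd w)) * cnj (a t (fst w) * b t (snd u)))"
      using eq by blast
    then show ?thesis unfolding density_def Rm_def T(1) by simp
  qed
  define X where "X t u = complex_of_real (x u) * a t (fst u) * cnj (b t (snd u))" for t u
  define Y where "Y t w = complex_of_real (x w) * cnj (a t (fst w)) * b t (snd w)" for t w
  define z where "z t = (\<Sum>u\<in>?V. X t u)" for t
  have cz: "cnj (z t) = (\<Sum>w\<in>?V. Y t w)" for t
    unfolding z_def X_def Y_def by simp
  have pw: "complex_of_real (x u * x w) * (complex_of_real (p t) * (a t (fst u) * b t (snd w)) * cnj (a t (fst w) * b t (snd u)))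
     = complex_of_real (p t) * (X t u * Y t w)" for t u w
    unfolding X_def Y_def by (simp add: algebra_simps)
  let ?Q = "(\<Sum>u\<in>?V. \<Sum>w\<in>?V. x u * x w * Rm G u w)"
  have "complex_of_real (?Q / T) = (\<Sum>u\<in>?V. \<Sum>w\<in>?V. complex_of_real (x u * x w) * complex_of_real (Rm G u w / T))"
    by (simp add: sum_divide_distrib)
  also have "\<dots> = (\<Sum>u\<in>?V. \<Sum>w\<in>?V. complex_of_real (x u * x w) *
      (\<Sum>t<n. complex_of_real (p t) * (a t (fst u) * b t (snd w)) * cnj (a t (fst w) * b t (snd u))))"
    using dens by (intro sum.cong refl) simp
  also have "\<dots> = (\<Sum>u\<in>?V. \<Sum>w\<in>?V. \<Sum>t<n. complex_of_real (p t) * (X t u * Y t w))"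
    by (simp only: sum_distrib_left pw)
  also have "\<dots> = (\<Sum>t<n. \<Sum>u\<in>?V. \<Sum>w\<in>?V. complex_of_real (p t) * (X t u * Y t w))"
    by (simp only: sum.swap[of _ "{..<n}"])
  also have "\<dots> = (\<Sum>t<n. complex_of_real (p t) * (\<Sum>u\<in>?V. \<Sum>w\<in>?V. X t u * Y t w))"
    by (simp only: sum_distrib_left)
  also have "\<dots> = (\<Sum>t<n. complex_of_real (p t) * (z t * cnj (z t)))"
  proof -
    have "z t * cnj (z t) = (\<Sum>u\<in>?V. \<Sum>w\<in>?V. X t u * Y t w)" for t
    proof -
      have "z t * cnj (z t) = (\<Sum>u\<in>?V. X t u) * (\<Sum>w\<in>?V. Y t w)" using cz z_def by simp
      then show ?thesis by (simp only: sum_product)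
    qed
    then show ?thesis by simp
  qed
  also have "\<dots> = complex_of_real (\<Sum>t<n. p t * (cmod (z t))^2)"
    by (simp add: complex_norm_square[symmetric])
  finally have "?Q / T = (\<Sum>t<n. p t * (cmod (z t))^2)" by (simp only: of_real_eq_iff)
  moreover have "(\<Sum>t<n. p t * (cmod (z t))^2) \<ge> 0" using p by (intro sum_nonneg) simp
  ultimately have "?Q / T \<ge> 0" by simp
  then show ?thesis using T(2) by (simp add: zero_le_divide_iff)
qed



lemma off_grid:
  assumes "\<forall>e\<in>E. is_edge_on V e" "v \<notin> V"
  shows "{e\<in>E. v\<in>e} = {}"
proof (rule ccontr)
  assume "{e\<in>E. v\<in>e} \<noteq> {}"
  then obtain e where e: "e \<in> E" "v \<in> e" by blast
  with assms(1) obtain a b where "a\<in>V" "b\<in>V" "e = {a,b}" unfolding is_edge_on_def by blast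
  with e(2) have "v \<in> V" by blast
  with assms(2) show False by blast
qed

lemma deg_split:
  assumes "\<forall>e\<in>EL X. is_edge_on V e" "\<forall>e\<in>EQ X. is_edge_on V e"
  shows "deg X v = card {w\<in>V. w\<noteq>v \<and> {v,w}\<in>EL X} + card {w\<in>V. w\<noteq>v \<and> {v,w}\<in>EQ X}"
  unfolding deg_def using deg_nbrs[OF assms(1)] deg_nbrs[OF assms(2)] by simp

lemma Rs:
  assumes hL: "\<forall>e\<in>EL (ptrans G). is_edge_on (grid m1 m2) e"
    and hQ: "\<forall>e\<in>EQ (ptrans G). is_edge_on (grid m1 m2) e"
    and sL: "\<forall>u v. {u,v} \<in> EL (ptrans G) \<longrightarrow> s u = s v"
    and sQ: "\<forall>u v. {u,v} \<in> EQ (ptrans G) \<longrightarrow> s v = - s u"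
    and v: "v \<in> grid m1 m2"
  shows "(\<Sum>w\<in>grid m1 m2. Rm G v w * s w) = (real (deg G v) - real (deg (ptrans G) v)) * s v"
proof -
  let ?V = "grid m1 m2"
  let ?H = "ptrans G"
  have fin: "finite ?V" unfolding grid_def by simp
  have sLw: "s w = s v" if "{v,w} \<in> EL ?H" for w using sL that by metis
  have sQw: "s w = - s v" if "{v,w} \<in> EQ ?H" for w using sQ that by metis
  have "(\<Sum>w\<in>?V. Rm G v w * s w) = (\<Sum>w\<in>?V. (if w = v then real (deg G v) * s v else 0)
      - (if w \<noteq> v \<and> {v,w}\<in>EL ?H then s v else 0) + (if w \<noteq> v \<and> {v,w}\<in>EQ ?H then - s v else 0))"
  proof (intro sum.cong refl)
    fix w assume "w \<in> ?V"
    show "Rm G v w * s w = (if w = v then real (deg G v) * s v else 0)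
      - (if w \<noteq> v \<and> {v,w}\<in>EL ?H then s v else 0) + (if w \<noteq> v \<and> {v,w}\<in>EQ ?H then - s v else 0)"
      unfolding Rm_eq using sLw[of w] sQw[of w] by (auto simp: algebra_simps)
  qed
  also have "\<dots> = (\<Sum>w\<in>?V. (if w = v then real (deg G v) * s v else 0))
      - (\<Sum>w\<in>?V. (if w \<noteq> v \<and> {v,w}\<in>EL ?H then s v else 0)) + (\<Sum>w\<in>?V. (if w \<noteq> v \<and> {v,w}\<in>EQ ?H then - s v else 0))"
    by (simp only: sum.distrib sum_subtractf)
  also have "\<dots> = real (deg G v) * s v - s v * real (card {w\<in>?V. w\<noteq>v \<and> {v,w}\<in>EL ?H})
      + (- s v) * real (card {w\<in>?V. w\<noteq>v \<and> {v,w}\<in>EQ ?H})"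
  proof -
    have vs: "{w\<in>?V. w = v} = {v}" using v by auto
    show ?thesis using fin by (simp only: sum_if_card vs) simp
  qed
  also have "\<dots> = (real (deg G v) - real (deg ?H v)) * s v"
    using deg_split[OF hL hQ, of v] by (simp add: algebra_simps)
  finally show ?thesis .
qed

theorem theorem3:
  fixes m1 m2 :: nat and G :: hgraph
  assumes "hybrid_graph m1 m2 G"
    and "separable m1 m2 (density m1 m2 G)"
    and "NOI_graph m1 m2 (ptrans G) \<or> COI_graph m1 m2 (ptrans G)"
  shows "degree_matrix G = degree_matrix (ptrans G)"
proof -
  let ?V = "grid m1 m2"
  let ?H = "ptrans G"
  have fin: "finite ?V" unfolding grid_def by simp
  have gL: "\<forall>e\<in>EL G. is_edge_on ?V e" and gQ: "\<forall>e\<in>EQ G. is_edge_on ?V e"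
    using assms(1) unfolding hybrid_graph_def by auto
  have hL: "\<forall>e\<in>EL ?H. is_edge_on ?V e"
    using ptrans_edge_on[OF gL] unfolding ptrans_def by simp
  have hQ: "\<forall>e\<in>EQ ?H. is_edge_on ?V e"
    using ptrans_edge_on[OF gQ] unfolding ptrans_def by simp
  have off: "deg G v = deg ?H v" if "v \<notin> ?V" for v
    unfolding deg_def off_grid[OF gL that] off_grid[OF gQ that] off_grid[OF hL that] off_grid[OF hQ that]
    by simp
  have sumeq: "(\<Sum>v\<in>?V. deg G v) = (\<Sum>v\<in>?V. deg ?H v)"
  proof -
    have "(\<Sum>v\<in>?V. deg G v) = (\<Sum>v\<in>?V. card {w\<in>?V. w\<noteq>v \<and> {v,w}\<in>EL G}) + (\<Sum>v\<in>?V. card {w\<in>?V. w\<noteq>v \<and> {v,w}\<in>EQ G})"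
      using deg_split[OF gL gQ] by (simp add: sum.distrib)
    also have "\<dots> = card {(v,w)\<in>?V\<times>?V. v\<noteq>w \<and> {v,w}\<in>EL G} + card {(v,w)\<in>?V\<times>?V. v\<noteq>w \<and> {v,w}\<in>EQ G}"
      using fin by (simp only: sum_nbrs)
    also have "\<dots> = card {(v,w)\<in>?V\<times>?V. v\<noteq>w \<and> {v,w}\<in>EL ?H} + card {(v,w)\<in>?V\<times>?V. v\<noteq>w \<and> {v,w}\<in>EQ ?H}"
      unfolding ptrans_def hgraph.simps by (simp only: card_pairs_ptrans)
    also have "\<dots> = (\<Sum>v\<in>?V. card {w\<in>?V. w\<noteq>v \<and> {v,w}\<in>EL ?H}) + (\<Sum>v\<in>?V. card {w\<in>?V. w\<noteq>v \<and> {v,w}\<in>EQ ?H})"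
      using fin by (simp only: sum_nbrs)
    also have "\<dots> = (\<Sum>v\<in>?V. deg ?H v)"
      using deg_split[OF hL hQ] by (simp add: sum.distrib)
    finally show ?thesis .
  qed
  define T where "T = (\<Sum>w\<in>?V. hybrid_laplacian G w w)"
  have Tdeg: "T = real (\<Sum>w\<in>?V. deg G w)" unfolding T_def by (simp add: hl_diag)
  have ong: "deg G v = deg ?H v" if v: "v \<in> ?V" for v
  proof (cases "T = 0")
    case True
    then have "real (\<Sum>w\<in>?V. deg G w) = 0" using Tdeg by metis
    then have "(\<Sum>w\<in>?V. deg G w) = 0" by (simp only: of_nat_eq_0_iff)
    then have a: "deg G v = 0" using fin v by simp
    from \<open>(\<Sum>w\<in>?V. deg G w) = 0\<close> sumeq have "(\<Sum>w\<in>?V. deg ?H w) = 0" by simp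
    then have "deg ?H v = 0" using fin v by simp
    with a show ?thesis by simp
  next
    case False
    have "T \<ge> 0" unfolding Tdeg by (rule of_nat_0_le_iff)
    with False have Tpos: "T > 0" by simp
    from sign_exists[OF assms(3)] obtain s :: "nat\<times>nat \<Rightarrow> real" where
      s1: "\<forall>v. s v = 1 \<or> s v = -1" and sL: "\<forall>u v. {u,v} \<in> EL ?H \<longrightarrow> s u = s v"
      and sQ: "\<forall>u v. {u,v} \<in> EQ ?H \<longrightarrow> s v = - s u" by blast
    define D where "D u = real (deg G u) - real (deg ?H u)" for u
    have RsV: "(\<Sum>w\<in>?V. Rm G u w * s w) = D u * s u" if "u \<in> ?V" for u
      unfolding D_def using Rs[OF hL hQ sL sQ that] .
    have ss: "s u * s u = 1" for u using s1[rule_format, of u] by auto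
    have Qs: "(\<Sum>u\<in>?V. \<Sum>w\<in>?V. s u * s w * Rm G u w) = 0"
    proof -
      have "(\<Sum>u\<in>?V. \<Sum>w\<in>?V. s u * s w * Rm G u w) = (\<Sum>u\<in>?V. \<Sum>w\<in>?V. s u * (Rm G u w * s w))"
        by (intro sum.cong refl) (simp only: mult.commute mult.left_commute mult.assoc)
      also have "\<dots> = (\<Sum>u\<in>?V. s u * (\<Sum>w\<in>?V. Rm G u w * s w))"
        by (simp only: sum_distrib_left)
      also have "\<dots> = (\<Sum>u\<in>?V. D u)"
      proof (intro sum.cong refl)
        fix u assume u: "u \<in> ?V"
        have "s u * (D u * s u) = D u * (s u * s u)" by (simp only: mult.commute mult.left_commute mult.assoc)
        then show "s u * (\<Sum>w\<in>?V. Rm G u w * s w) = D u" using RsV[OF u] ss[of u] by simp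
      qed
      also have "\<dots> = real (\<Sum>u\<in>?V. deg G u) - real (\<Sum>u\<in>?V. deg ?H u)"
        unfolding D_def by (simp add: sum_subtractf)
      also have "\<dots> = 0" using sumeq by simp
      finally show ?thesis .
    qed
    have "\<forall>t. 2*t*(D v * s v) + t^2 * Rm G v v \<ge> 0"
    proof
      fix t :: real
      let ?x = "\<lambda>u. s u + t*(if u=v then 1 else 0)"
      have A: "(\<Sum>u\<in>?V. \<Sum>w\<in>?V. ?x u * ?x w * Rm G u w) \<ge> 0"
        by (rule psd[OF assms(2) T_def Tpos, where x = ?x])
      have B: "(\<Sum>u\<in>?V. \<Sum>w\<in>?V. ?x u * ?x w * Rm G u w)
          = (\<Sum>u\<in>?V. \<Sum>w\<in>?V. s u * s w * Rm G u w) + 2*t*(\<Sum>w\<in>?V. Rm G v w * s w) + t^2 * Rm G v v"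
        by (rule expand[OF fin v Rm_sym])
      from A have "0 \<le> (\<Sum>u\<in>?V. \<Sum>w\<in>?V. s u * s w * Rm G u w) + 2*t*(\<Sum>w\<in>?V. Rm G v w * s w) + t^2 * Rm G v v"
        by (simp only: B)
      then show "2*t*(D v * s v) + t^2 * Rm G v v \<ge> 0"
        by (simp only: Qs RsV[OF v] add_0_left)
    qed
    then have "D v * s v = 0" by (rule quad_zero)
    then have "D v = 0" using s1[rule_format, of v] by auto
    then show ?thesis unfolding D_def by simp
  qed
  have "\<forall>v. deg G v = deg ?H v" using ong off by blast
  then show ?thesis unfolding degree_matrix_def by (intro ext) metis
qed


end
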